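(* Let $\Phi$ be a CNF formula in which every clause consists of exactly two (possibly equal) literals, and let $k$ be an integer. For each variable $x$ let $n(x)$ be the number of occurrences of $x$ in $\Phi$ (a clause $(l\vee l)$ with $l\in\{x,\neg x\}$ counts as two), numbered $1,\dots,n(x)$ arbitrarily. Build a graph $G$ with vertices $v(x,i)$ and $v(\neg x,i)$ for every variable $x$ and $1\le i\le n(x)$; for each $x$, join every vertex of $V(x)=\{v(x,i)\}_i$ to every vertex of $V(\neg x)=\{v(\neg x,j)\}_j$; and for each clause $C=(l_x\vee l_y)$, where $l_x$ is the $i$-th occurrence of variable $x$ and $l_y$ the $j$-th occurrence of variable $y$ (with $(x,i)\neq(y,j)$), add the edge $v(l_x,i)v(l_y,j)$. Then $G$ has a perfect matching, and there is a set of at most $k$ clauses of $\Phi$ whose deletion makes $\Phi$ satisfiable iff $G$ has a vertex cover of size at most $\mu(G)+k$.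
   Context: $\mu(G)$ denotes the size of a maximum matching of $G$. Here $v(l,i)$ for a literal $l\in\{x,\neg x\}$ denotes the vertex $v(x,i)$ or $v(\neg x,i)$ respectively. *)

theory Defs
  imports Main
begin

text \<open>Literals: (x, True) is the positive literal x, (x, False) is the negative literal not x.
A 2-CNF formula is a list of clauses, each clause a pair of (possibly equal) literals.\<close>

type_synonym 'v lit = "'v \<times> bool"
type_synonym 'v cnf2 = "('v lit \<times> 'v lit) list"

definition lit_at :: "'v cnf2 \<Rightarrow> nat \<Rightarrow> bool \<Rightarrow> 'v lit" where
  "lit_at \<Phi> c p = (if p then snd (\<Phi> ! c) else fst (\<Phi> ! c))"

definition occs :: "'v cnf2 \<Rightarrow> 'v \<Rightarrow> (nat \<times> bool) set" where
  "occs \<Phi> x = {(c, p). c < length \<Phi> \<and> fst (lit_at \<Phi> c p) = x}"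

definition nocc :: "'v cnf2 \<Rightarrow> 'v \<Rightarrow> nat" where
  "nocc \<Phi> x = card (occs \<Phi> x)"

definition valid_numbering :: "'v cnf2 \<Rightarrow> (nat \<Rightarrow> bool \<Rightarrow> nat) \<Rightarrow> bool" where
  "valid_numbering \<Phi> num =
     (\<forall>x. bij_betw (\<lambda>(c, p). num c p) (occs \<Phi> x) {1..nocc \<Phi> x})"

text \<open>Vertices v(l,i) are encoded as (x, b, i) where l = (x, b).\<close>
definition red_vertices :: "'v cnf2 \<Rightarrow> ('v \<times> bool \<times> nat) set" where
  "red_vertices \<Phi> = {(x, b, i). 1 \<le> i \<and> i \<le> nocc \<Phi> x}"

definition red_edges :: "'v cnf2 \<Rightarrow> (nat \<Rightarrow> bool \<Rightarrow> nat) \<Rightarrow> ('v \<times> bool \<times> nat) set set" where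
  "red_edges \<Phi> num =
     {{(x, True, i), (x, False, j)} | x i j. 1 \<le> i \<and> i \<le> nocc \<Phi> x \<and> 1 \<le> j \<and> j \<le> nocc \<Phi> x}
   \<union> {{(fst (lit_at \<Phi> c False), snd (lit_at \<Phi> c False), num c False),
       (fst (lit_at \<Phi> c True), snd (lit_at \<Phi> c True), num c True)} | c. c < length \<Phi>}"

definition is_matching :: "'a set set \<Rightarrow> 'a set set \<Rightarrow> bool" where
  "is_matching E M = (M \<subseteq> E \<and> (\<forall>e1\<in>M. \<forall>e2\<in>M. e1 \<noteq> e2 \<longrightarrow> e1 \<inter> e2 = {}))"

definition is_perfect_matching :: "'a set \<Rightarrow> 'a set set \<Rightarrow> 'a set set \<Rightarrow> bool" where
  "is_perfect_matching V E M = (is_matching E M \<and> \<Union>M = V)"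

definition matching_number :: "'a set set \<Rightarrow> nat" where
  "matching_number E = Max (card ` {M. is_matching E M})"

definition is_vertex_cover :: "'a set \<Rightarrow> 'a set set \<Rightarrow> 'a set \<Rightarrow> bool" where
  "is_vertex_cover V E C = (C \<subseteq> V \<and> (\<forall>e\<in>E. e \<inter> C \<noteq> {}))"

definition lit_true :: "('v \<Rightarrow> bool) \<Rightarrow> 'v lit \<Rightarrow> bool" where
  "lit_true \<sigma> l = (\<sigma> (fst l) = snd l)"

definition clause_sat :: "('v \<Rightarrow> bool) \<Rightarrow> 'v lit \<times> 'v lit \<Rightarrow> bool" where
  "clause_sat \<sigma> C = (lit_true \<sigma> (fst C) \<or> lit_true \<sigma> (snd C))"

definition sat_after_deletion :: "'v cnf2 \<Rightarrow> nat set \<Rightarrow> bool" where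
  "sat_after_deletion \<Phi> D =
     (\<exists>\<sigma>. \<forall>c < length \<Phi>. c \<notin> D \<longrightarrow> clause_sat \<sigma> (\<Phi> ! c))"

end

theory Submission
  imports Defs
begin

definition vx :: "'v cnf2 \<Rightarrow> (nat \<Rightarrow> bool \<Rightarrow> nat) \<Rightarrow> (nat \<times> bool) \<times> bool \<Rightarrow> 'v \<times> bool \<times> nat" where
  "vx \<Phi> num q = (fst (lit_at \<Phi> (fst (fst q)) (snd (fst q))), snd q, num (fst (fst q)) (snd (fst q)))"

definition Occ :: "'v cnf2 \<Rightarrow> (nat \<times> bool) set" where
  "Occ \<Phi> = {..<length \<Phi>} \<times> UNIV"

definition pm :: "'v cnf2 \<Rightarrow> (nat \<Rightarrow> bool \<Rightarrow> nat) \<Rightarrow> ('v \<times> bool \<times> nat) set set" where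
  "pm \<Phi> num = (\<lambda>q. {vx \<Phi> num (q,True), vx \<Phi> num (q,False)}) ` Occ \<Phi>"

context
  fixes \<Phi> :: "'v cnf2" and num :: "nat \<Rightarrow> bool \<Rightarrow> nat"
  assumes vn: "valid_numbering \<Phi> num"
begin

lemma occ_in: "(c,p) \<in> occs \<Phi> x \<Longrightarrow> num c p \<in> {1..nocc \<Phi> x}"
  using vn unfolding valid_numbering_def bij_betw_def by fastforce

lemma occ_inj: "(c,p) \<in> occs \<Phi> x \<Longrightarrow> (c',p') \<in> occs \<Phi> x \<Longrightarrow> num c p = num c' p' \<Longrightarrow> (c,p) = (c',p')"
  using vn unfolding valid_numbering_def bij_betw_def inj_on_def by fastforce

lemma occ_surj: "i \<in> {1..nocc \<Phi> x} \<Longrightarrow> \<exists>c p. (c,p) \<in> occs \<Phi> x \<and> num c p = i"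
proof -
  assume "i \<in> {1..nocc \<Phi> x}"
  then have "i \<in> (\<lambda>(c, p). num c p) ` occs \<Phi> x"
    using vn unfolding valid_numbering_def bij_betw_def by metis
  then show ?thesis by auto
qed

lemma vx_inj: "inj_on (vx \<Phi> num) (Occ \<Phi> \<times> UNIV)"
proof (rule inj_onI)
  fix q q' assume q: "q \<in> Occ \<Phi> \<times> UNIV" and q': "q' \<in> Occ \<Phi> \<times> UNIV" and e: "vx \<Phi> num q = vx \<Phi> num q'"
  obtain c p b where qq: "q = ((c,p),b)" by (metis prod.collapse)
  obtain c' p' b' where qq': "q' = ((c',p'),b')" by (metis prod.collapse)
  let ?x = "fst (lit_at \<Phi> c p)"
  have "(c,p) \<in> occs \<Phi> ?x" using q qq by (auto simp: occs_def Occ_def)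
  moreover have "(c',p') \<in> occs \<Phi> ?x" using q' qq' e qq by (auto simp: occs_def Occ_def vx_def)
  moreover have "num c p = num c' p'" using e qq qq' by (simp add: vx_def)
  ultimately have "(c,p) = (c',p')" by (rule occ_inj)
  then show "q = q'" using e qq qq' by (simp add: vx_def)
qed

lemma vx_img: "vx \<Phi> num ` (Occ \<Phi> \<times> UNIV) = red_vertices \<Phi>"
proof
  show "vx \<Phi> num ` (Occ \<Phi> \<times> UNIV) \<subseteq> red_vertices \<Phi>"
  proof
    fix v assume "v \<in> vx \<Phi> num ` (Occ \<Phi> \<times> UNIV)"
    then obtain c p b where cp: "(c,p) \<in> Occ \<Phi>" and v: "v = vx \<Phi> num ((c,p),b)" by auto
    have "(c,p) \<in> occs \<Phi> (fst (lit_at \<Phi> c p))" using cp by (auto simp: occs_def Occ_def)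
    from occ_in[OF this] show "v \<in> red_vertices \<Phi>" using v by (simp add: vx_def red_vertices_def)
  qed
next
  show "red_vertices \<Phi> \<subseteq> vx \<Phi> num ` (Occ \<Phi> \<times> UNIV)"
  proof
    fix v assume "v \<in> red_vertices \<Phi>"
    then obtain x b i where v: "v = (x,b,i)" and i: "i \<in> {1..nocc \<Phi> x}" by (auto simp: red_vertices_def)
    from occ_surj[OF i] obtain c p where cp: "(c,p) \<in> occs \<Phi> x" "num c p = i" by blast
    then have "v = vx \<Phi> num ((c,p),b)" "((c,p),b) \<in> Occ \<Phi> \<times> UNIV" using v by (auto simp: vx_def occs_def Occ_def)
    then show "v \<in> vx \<Phi> num ` (Occ \<Phi> \<times> UNIV)" by blast
  qed
qed

lemma finV: "finite (red_vertices \<Phi>)"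
  using vx_img[symmetric] by (simp add: Occ_def)

lemma cardV: "card (red_vertices \<Phi>) = 2 * card (Occ \<Phi>)"
proof -
  have "card (red_vertices \<Phi>) = card (Occ \<Phi> \<times> (UNIV::bool set))"
    using vx_img card_image[OF vx_inj] by metis
  also have "\<dots> = 2 * card (Occ \<Phi>)" by (simp add: card_cartesian_product mult.commute)
  finally show ?thesis .
qed

lemma edges_ok: "e \<in> red_edges \<Phi> num \<Longrightarrow> e \<subseteq> red_vertices \<Phi> \<and> card e = 2"
proof -
  assume "e \<in> red_edges \<Phi> num"
  then consider (a) x i j where "e = {(x, True, i), (x, False, j)}" "1 \<le> i \<and> i \<le> nocc \<Phi> x \<and> 1 \<le> j \<and> j \<le> nocc \<Phi> x"
    | (b) c where "e = {vx \<Phi> num ((c,False), snd (lit_at \<Phi> c False)), vx \<Phi> num ((c,True), snd (lit_at \<Phi> c True))}" "c < length \<Phi>"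
    unfolding red_edges_def vx_def by auto
  then show ?thesis
  proof cases
    case a then show ?thesis by (auto simp: red_vertices_def)
  next
    case b
    have m: "((c,False), snd (lit_at \<Phi> c False)) \<in> Occ \<Phi> \<times> UNIV" "((c,True), snd (lit_at \<Phi> c True)) \<in> Occ \<Phi> \<times> UNIV"
      using b by (auto simp: Occ_def)
    then have "vx \<Phi> num ((c,False), snd (lit_at \<Phi> c False)) \<noteq> vx \<Phi> num ((c,True), snd (lit_at \<Phi> c True))"
      using inj_onD[OF vx_inj] by fastforce
    then show ?thesis using b m vx_img by auto
  qed
qed


lemma pm_perfect: "is_perfect_matching (red_vertices \<Phi>) (red_edges \<Phi> num) (pm \<Phi> num)"
  unfolding is_perfect_matching_def is_matching_def
proof (intro conjI)
  show "pm \<Phi> num \<subseteq> red_edges \<Phi> num"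
  proof
    fix e assume "e \<in> pm \<Phi> num"
    then obtain c p where cp: "(c,p) \<in> Occ \<Phi>" and e: "e = {vx \<Phi> num ((c,p),True), vx \<Phi> num ((c,p),False)}"
      unfolding pm_def by auto
    have "(c,p) \<in> occs \<Phi> (fst (lit_at \<Phi> c p))" using cp by (auto simp: occs_def Occ_def)
    from occ_in[OF this] show "e \<in> red_edges \<Phi> num" unfolding e red_edges_def vx_def by auto
  qed
next
  show "\<forall>e1\<in>pm \<Phi> num. \<forall>e2\<in>pm \<Phi> num. e1 \<noteq> e2 \<longrightarrow> e1 \<inter> e2 = {}"
  proof (intro ballI impI)
    fix e1 e2 assume "e1 \<in> pm \<Phi> num" "e2 \<in> pm \<Phi> num" "e1 \<noteq> e2"
    then obtain q q' where q: "q \<in> Occ \<Phi>" "q' \<in> Occ \<Phi>" and e: "e1 = {vx \<Phi> num (q,True), vx \<Phi> num (q,False)}"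
      "e2 = {vx \<Phi> num (q',True), vx \<Phi> num (q',False)}" unfolding pm_def by auto
    have "q \<noteq> q'" using e \<open>e1 \<noteq> e2\<close> by auto
    have ne: "vx \<Phi> num (q,b) \<noteq> vx \<Phi> num (q',b')" for b b'
    proof
      assume "vx \<Phi> num (q,b) = vx \<Phi> num (q',b')"
      then have "(q,b) = (q',b')" by (rule inj_onD[OF vx_inj]) (use q in auto)
      then show False using \<open>q \<noteq> q'\<close> by simp
    qed
    show "e1 \<inter> e2 = {}" unfolding e using ne by blast
  qed
next
  have "\<Union>(pm \<Phi> num) = vx \<Phi> num ` (Occ \<Phi> \<times> UNIV)"
  proof
    show "\<Union>(pm \<Phi> num) \<subseteq> vx \<Phi> num ` (Occ \<Phi> \<times> UNIV)" unfolding pm_def by auto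
    show "vx \<Phi> num ` (Occ \<Phi> \<times> UNIV) \<subseteq> \<Union>(pm \<Phi> num)"
    proof
      fix v assume "v \<in> vx \<Phi> num ` (Occ \<Phi> \<times> UNIV)"
      then obtain q b where "q \<in> Occ \<Phi>" "v = vx \<Phi> num (q,b)" by auto
      then show "v \<in> \<Union>(pm \<Phi> num)" unfolding pm_def by (cases b) auto
    qed
  qed
  then show "\<Union>(pm \<Phi> num) = red_vertices \<Phi>" using vx_img by simp
qed

lemma card_pm: "card (pm \<Phi> num) = card (Occ \<Phi>)"
  unfolding pm_def
proof (rule card_image, rule inj_onI)
  fix q q' assume q: "q \<in> Occ \<Phi>" "q' \<in> Occ \<Phi>" and e: "{vx \<Phi> num (q,True), vx \<Phi> num (q,False)} = {vx \<Phi> num (q',True), vx \<Phi> num (q',False)}"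
  have "vx \<Phi> num (q,True) = vx \<Phi> num (q',True) \<or> vx \<Phi> num (q,True) = vx \<Phi> num (q',False)"
    using e by (metis insertCI insertE singletonD)
  then show "q = q'" using q inj_onD[OF vx_inj] by fastforce
qed

lemma matching_bound: "is_matching (red_edges \<Phi> num) M \<Longrightarrow> card M \<le> card (Occ \<Phi>)"
proof -
  assume m: "is_matching (red_edges \<Phi> num) M"
  have sub: "M \<subseteq> Pow (red_vertices \<Phi>)" using m edges_ok unfolding is_matching_def by blast
  have finM: "finite M" using finite_subset[OF sub] finV by simp
  have "card (\<Union>M) = sum card M"
  proof (rule card_Union_disjoint)
    show "pairwise disjnt M" using m by (auto simp: is_matching_def pairwise_def disjnt_def)
    show "\<And>A. A \<in> M \<Longrightarrow> finite A" using sub finV by (meson PowD finite_subset subsetD)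
  qed
  also have "\<dots> = sum (\<lambda>_. 2) M" using m edges_ok unfolding is_matching_def by (intro sum.cong) auto
  also have "\<dots> = 2 * card M" by simp
  finally have "2 * card M = card (\<Union>M)" by simp
  also have "\<dots> \<le> card (red_vertices \<Phi>)" using sub finV by (intro card_mono) auto
  finally show ?thesis using cardV by simp
qed

lemma mu_eq: "matching_number (red_edges \<Phi> num) = card (Occ \<Phi>)"
  unfolding matching_number_def
proof (rule Max_eqI)
  show "finite (card ` {M. is_matching (red_edges \<Phi> num) M})"
    by (rule finite_subset[of _ "{..card (Occ \<Phi>)}"]) (auto dest: matching_bound)
  show "\<And>y. y \<in> card ` {M. is_matching (red_edges \<Phi> num) M} \<Longrightarrow> y \<le> card (Occ \<Phi>)"
    by (auto dest: matching_bound)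
  show "card (Occ \<Phi>) \<in> card ` {M. is_matching (red_edges \<Phi> num) M}"
    using pm_perfect card_pm unfolding is_perfect_matching_def by (metis image_eqI mem_Collect_eq)
qed


lemma clause_edge: "c < length \<Phi> \<Longrightarrow> {vx \<Phi> num ((c,False), snd (lit_at \<Phi> c False)), vx \<Phi> num ((c,True), snd (lit_at \<Phi> c True))} \<in> red_edges \<Phi> num"
  unfolding red_edges_def vx_def by auto

lemma vx_fst: "vx \<Phi> num ((c,p), snd (lit_at \<Phi> c p)) = (fst (lit_at \<Phi> c p), snd (lit_at \<Phi> c p), num c p)"
  by (simp add: vx_def)

lemma fwd:
  assumes D: "D \<subseteq> {..<length \<Phi>}" and sat: "\<forall>c < length \<Phi>. c \<notin> D \<longrightarrow> clause_sat \<sigma> (\<Phi> ! c)"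
  shows "\<exists>C. is_vertex_cover (red_vertices \<Phi>) (red_edges \<Phi> num) C \<and> card C \<le> card (Occ \<Phi>) + card D"
proof -
  define var where "var q = fst (lit_at \<Phi> (fst q) (snd q))" for q
  define C where "C = (\<lambda>q. vx \<Phi> num (q, \<sigma> (var q))) ` Occ \<Phi> \<union> (\<lambda>c. vx \<Phi> num ((c,False), snd (lit_at \<Phi> c False))) ` D"
  have finD: "finite D" using D finite_subset by blast
  have "card C \<le> card ((\<lambda>q. vx \<Phi> num (q, \<sigma> (var q))) ` Occ \<Phi>) + card ((\<lambda>c. vx \<Phi> num ((c,False), snd (lit_at \<Phi> c False))) ` D)"
    unfolding C_def by (rule card_Un_le)
  also have "\<dots> \<le> card (Occ \<Phi>) + card D" by (intro add_mono card_image_le) (auto simp: Occ_def finD)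
  finally have cC: "card C \<le> card (Occ \<Phi>) + card D" .
  have sub: "C \<subseteq> red_vertices \<Phi>" unfolding C_def using vx_img D by (auto simp: Occ_def)
  have cov: "\<forall>e\<in>red_edges \<Phi> num. e \<inter> C \<noteq> {}"
  proof
    fix e assume "e \<in> red_edges \<Phi> num"
    then consider (a) x i j where "e = {(x, True, i), (x, False, j)}" "i \<in> {1..nocc \<Phi> x}" "j \<in> {1..nocc \<Phi> x}"
      | (b) c where "e = {vx \<Phi> num ((c,False), snd (lit_at \<Phi> c False)), vx \<Phi> num ((c,True), snd (lit_at \<Phi> c True))}" "c < length \<Phi>"
      unfolding red_edges_def vx_def by auto
    then show "e \<inter> C \<noteq> {}"
    proof cases
      case a
      obtain c p where cp: "(c,p) \<in> occs \<Phi> x" "num c p = i" using occ_surj[OF a(2)] by blast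
      obtain c' p' where cp': "(c',p') \<in> occs \<Phi> x" "num c' p' = j" using occ_surj[OF a(3)] by blast
      show ?thesis
      proof (cases "\<sigma> x")
        case True
        have "vx \<Phi> num ((c,p), \<sigma> (var (c,p))) \<in> C" using cp(1) unfolding C_def by (auto simp: Occ_def occs_def)
        moreover have "vx \<Phi> num ((c,p), \<sigma> (var (c,p))) = (x,True,i)" using cp True by (auto simp: vx_def var_def occs_def)
        ultimately show ?thesis using a by auto
      next
        case False
        have "vx \<Phi> num ((c',p'), \<sigma> (var (c',p'))) \<in> C" using cp'(1) unfolding C_def by (auto simp: Occ_def occs_def)
        moreover have "vx \<Phi> num ((c',p'), \<sigma> (var (c',p'))) = (x,False,j)" using cp' False by (auto simp: vx_def var_def occs_def)
        ultimately show ?thesis using a by auto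
      qed
    next
      case b
      show ?thesis
      proof (cases "c \<in> D")
        case True then show ?thesis using b unfolding C_def by auto
      next
        case False
        then have "clause_sat \<sigma> (\<Phi> ! c)" using sat b by auto
        then have "\<sigma> (fst (lit_at \<Phi> c False)) = snd (lit_at \<Phi> c False) \<or> \<sigma> (fst (lit_at \<Phi> c True)) = snd (lit_at \<Phi> c True)"
          by (auto simp: clause_sat_def lit_true_def lit_at_def)
        moreover have "vx \<Phi> num ((c,False), \<sigma> (var (c,False))) \<in> C" "vx \<Phi> num ((c,True), \<sigma> (var (c,True))) \<in> C"
          using b unfolding C_def by (auto simp: Occ_def)
        ultimately show ?thesis using b by (auto simp: var_def)
      qed
    qed
  qed
  show ?thesis using sub cov cC by (auto simp: is_vertex_cover_def)
qed

lemma bwd: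
  assumes C: "is_vertex_cover (red_vertices \<Phi>) (red_edges \<Phi> num) C"
  shows "\<exists>D. D \<subseteq> {..<length \<Phi>} \<and> sat_after_deletion \<Phi> D \<and> card (Occ \<Phi>) + card D \<le> card C"
proof -
  define var where "var q = fst (lit_at \<Phi> (fst q) (snd q))" for q
  define \<sigma> where "\<sigma> x = (\<forall>i\<in>{1..nocc \<Phi> x}. (x,True,i) \<in> C)" for x
  define D where "D = {c. c < length \<Phi> \<and> \<not> clause_sat \<sigma> (\<Phi> ! c)}"
  have sad: "sat_after_deletion \<Phi> D" unfolding sat_after_deletion_def D_def by auto
  have CV: "C \<subseteq> red_vertices \<Phi>" and cov: "\<And>e. e \<in> red_edges \<Phi> num \<Longrightarrow> e \<inter> C \<noteq> {}"
    using C by (auto simp: is_vertex_cover_def)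
  have finC: "finite C" using CV finV finite_subset by blast
  define A where "A = (\<lambda>q. vx \<Phi> num (q, \<sigma> (var q))) ` Occ \<Phi>"
  have AC: "A \<subseteq> C"
  proof
    fix v assume "v \<in> A"
    then obtain c p where q: "(c,p) \<in> Occ \<Phi>" and v: "v = vx \<Phi> num ((c,p), \<sigma> (var (c,p)))" unfolding A_def by auto
    define x where "x = var (c,p)"
    have oc: "(c,p) \<in> occs \<Phi> x" using q by (auto simp: occs_def Occ_def x_def var_def)
    have i: "num c p \<in> {1..nocc \<Phi> x}" by (rule occ_in[OF oc])
    have vv: "v = (x, \<sigma> x, num c p)" using v by (simp add: vx_def x_def var_def)
    show "v \<in> C"
    proof (cases "\<sigma> x")
      case True then show ?thesis using vv i by (auto simp: \<sigma>_def)
    next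
      case False
      then obtain i0 where i0: "i0 \<in> {1..nocc \<Phi> x}" "(x,True,i0) \<notin> C" by (auto simp: \<sigma>_def)
      have "{(x,True,i0),(x,False,num c p)} \<in> red_edges \<Phi> num" using i0 i unfolding red_edges_def by auto
      from cov[OF this] have "(x,False,num c p) \<in> C" using i0 by auto
      then show ?thesis using vv False by simp
    qed
  qed
  have "\<forall>c\<in>D. \<exists>p. vx \<Phi> num ((c,p), \<not> \<sigma> (var (c,p))) \<in> C"
  proof
    fix c assume "c \<in> D"
    then have c: "c < length \<Phi>" and ns: "\<not> clause_sat \<sigma> (\<Phi> ! c)" by (auto simp: D_def)
    have ff: "snd (lit_at \<Phi> c False) = (\<not> \<sigma> (var (c,False)))" "snd (lit_at \<Phi> c True) = (\<not> \<sigma> (var (c,True)))"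
      using ns by (auto simp: clause_sat_def lit_true_def lit_at_def var_def)
    from cov[OF clause_edge[OF c]] have
      "vx \<Phi> num ((c,False), snd (lit_at \<Phi> c False)) \<in> C \<or> vx \<Phi> num ((c,True), snd (lit_at \<Phi> c True)) \<in> C"
      by blast
    then show "\<exists>p. vx \<Phi> num ((c,p), \<not> \<sigma> (var (c,p))) \<in> C"
    proof
      assume "vx \<Phi> num ((c,False), snd (lit_at \<Phi> c False)) \<in> C"
      then show ?thesis unfolding ff by blast
    next
      assume "vx \<Phi> num ((c,True), snd (lit_at \<Phi> c True)) \<in> C"
      then show ?thesis unfolding ff by blast
    qed
  qed
  then obtain P where P: "\<forall>c\<in>D. vx \<Phi> num ((c,P c), \<not> \<sigma> (var (c,P c))) \<in> C" by metis
  define g where "g c = vx \<Phi> num ((c,P c), \<not> \<sigma> (var (c,P c)))" for c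
  have DO: "\<And>c. c \<in> D \<Longrightarrow> ((c, P c), \<not> \<sigma> (var (c,P c))) \<in> Occ \<Phi> \<times> UNIV" by (auto simp: D_def Occ_def)
  have ginj: "inj_on g D"
  proof (rule inj_onI)
    fix c c' assume "c \<in> D" "c' \<in> D" "g c = g c'"
    then have "((c, P c), \<not> \<sigma> (var (c,P c))) = ((c', P c'), \<not> \<sigma> (var (c',P c')))"
      using inj_onD[OF vx_inj _ DO DO] unfolding g_def by blast
    then show "c = c'" by simp
  qed
  have BC: "g ` D \<subseteq> C" using P g_def by auto
  have disj: "A \<inter> g ` D = {}"
  proof (rule ccontr)
    assume "A \<inter> g ` D \<noteq> {}"
    then obtain q c where q: "q \<in> Occ \<Phi>" and c: "c \<in> D" and e: "vx \<Phi> num (q, \<sigma> (var q)) = g c"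
    proof -
      from \<open>A \<inter> g ` D \<noteq> {}\<close> obtain v where "v \<in> A" "v \<in> g ` D" by blast
      then show ?thesis using that unfolding A_def by blast
    qed
    have "(q, \<sigma> (var q)) = ((c, P c), \<not> \<sigma> (var (c,P c)))"
      by (rule inj_onD[OF vx_inj e[unfolded g_def]]) (use q DO[OF c] in auto)
    then show False by auto
  qed
  have finA: "finite A" unfolding A_def by (simp add: Occ_def)
  have finD: "finite D" unfolding D_def by auto
  have "card A = card (Occ \<Phi>)" unfolding A_def
  proof (rule card_image, rule inj_onI)
    fix q q' assume qq: "q \<in> Occ \<Phi>" "q' \<in> Occ \<Phi>" and eq: "vx \<Phi> num (q, \<sigma> (var q)) = vx \<Phi> num (q', \<sigma> (var q'))"
    have "(q, \<sigma> (var q)) = (q', \<sigma> (var q'))" by (rule inj_onD[OF vx_inj eq]) (use qq in auto)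
    then show "q = q'" by simp
  qed
  moreover have "card (g ` D) = card D" using card_image[OF ginj] .
  moreover have "card (A \<union> g ` D) = card A + card (g ` D)" using card_Un_disjoint[OF finA _ disj] finD by simp
  moreover have "card (A \<union> g ` D) \<le> card C" using AC BC finC by (intro card_mono) auto
  ultimately have "card (Occ \<Phi>) + card D \<le> card C" by simp
  moreover have "D \<subseteq> {..<length \<Phi>}" by (auto simp: D_def)
  ultimately show ?thesis using sad by blast
qed

end

theorem mainTheorem10:
  fixes \<Phi> :: "'v cnf2" and k :: int and num :: "nat \<Rightarrow> bool \<Rightarrow> nat"
  assumes "valid_numbering \<Phi> num"
  shows "(\<exists>M. is_perfect_matching (red_vertices \<Phi>) (red_edges \<Phi> num) M)
    \<and> ((\<exists>D. D \<subseteq> {..<length \<Phi>} \<and> int (card D) \<le> k \<and> sat_after_deletion \<Phi> D)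
       \<longleftrightarrow> (\<exists>C. is_vertex_cover (red_vertices \<Phi>) (red_edges \<Phi> num) C
              \<and> int (card C) \<le> int (matching_number (red_edges \<Phi> num)) + k))"
proof (intro conjI iffI)
  show "\<exists>M. is_perfect_matching (red_vertices \<Phi>) (red_edges \<Phi> num) M"
    using pm_perfect[OF assms] by blast
next
  assume "\<exists>D. D \<subseteq> {..<length \<Phi>} \<and> int (card D) \<le> k \<and> sat_after_deletion \<Phi> D"
  then obtain D \<sigma> where D: "D \<subseteq> {..<length \<Phi>}" "int (card D) \<le> k" and s: "\<forall>c < length \<Phi>. c \<notin> D \<longrightarrow> clause_sat \<sigma> (\<Phi> ! c)"
    unfolding sat_after_deletion_def by blast
  from fwd[OF assms D(1) s] obtain C where "is_vertex_cover (red_vertices \<Phi>) (red_edges \<Phi> num) C" "card C \<le> card (Occ \<Phi>) + card D" by blast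
  then show "\<exists>C. is_vertex_cover (red_vertices \<Phi>) (red_edges \<Phi> num) C \<and> int (card C) \<le> int (matching_number (red_edges \<Phi> num)) + k"
    using D(2) mu_eq[OF assms] by (intro exI[of _ C]) auto
next
  assume "\<exists>C. is_vertex_cover (red_vertices \<Phi>) (red_edges \<Phi> num) C \<and> int (card C) \<le> int (matching_number (red_edges \<Phi> num)) + k"
  then obtain C where C: "is_vertex_cover (red_vertices \<Phi>) (red_edges \<Phi> num) C" "int (card C) \<le> int (matching_number (red_edges \<Phi> num)) + k" by blast
  from bwd[OF assms C(1)] obtain D where "D \<subseteq> {..<length \<Phi>}" "sat_after_deletion \<Phi> D" "card (Occ \<Phi>) + card D \<le> card C" by blast
  then show "\<exists>D. D \<subseteq> {..<length \<Phi>} \<and> int (card D) \<le> k \<and> sat_after_deletion \<Phi> D"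
    using C(2) mu_eq[OF assms] by (intro exI[of _ D]) auto
qed

end
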